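(* Let $X$ be a real separable Hilbert space with inner product $(\cdot,\cdot)_X$, let $T>0$, and let $0=t_1<t_2<\cdots<t_{s+1}=T$. Set $\delta_j=t_{j+1}-t_j$ for $j=1,\dots,s$ and $\Delta=\mathrm{diag}(\delta_1,\dots,\delta_s)\in\mathbb{R}^{s\times s}$. Let $\{\phi_k\}_{k=1}^m\subset X$ be linearly independent, let $M\in\mathbb{R}^{m\times m}$ have entries $M_{j,k}=(\phi_j,\phi_k)_X$, and let $U\in\mathbb{R}^{m\times s}$ have entries $U_{k,j}$. Define $u_j=\sum_{k=1}^m U_{k,j}\phi_k\in X$ for $j=1,\dots,s$, and $u\in L^2(0,T;X)$ by $u(t)=\sum_{j=1}^s u_j\chi_j(t)$, where $\chi_j(t)=1$ for $t_j<t<t_{j+1}$ and $\chi_j(t)=0$ otherwise. Let $K:L^2(0,T)\to X$ be the POD operator $Kf=\int_0^T u(t)f(t)\,dt$. Then $\{\sigma_i,w_i,v_i\}\subset\mathbb{R}\times\mathbb{R}^s_\Delta\times\mathbb{R}^m_M$ are the core singular values and singular vectors of the matrix $U\Delta:\mathbb{R}^s_\Delta\to\mathbb{R}^m_M$ if and only if $\{\sigma_i,f_i,x_i\}\subset\mathbb{R}\times L^2(0,T)\times X$ are the core singular values and singular vectors of $K:L^2(0,T)\to X$, where for all $i$ the vectors $v_i=(v_{i,1},\dots,v_{i,m})$ and $x_i$ are related by $$x_i=\sum_{k=1}^m v_{i,k}\phi_k,$$ and $w_i=(w_{i,1},\dots,w_{i,s})$ and $f_i$ are related by $$w_{i,j}=\int_0^T\delta_j^{-1}\chi_j(t)f_i(t)\,dt,\qquad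 f_i(t)=\sum_{\ell=1}^s w_{i,\ell}\chi_\ell(t).$$
   Context: For a symmetric positive definite matrix $M\in\mathbb{R}^{m\times m}$, $\mathbb{R}^m_M$ denotes $\mathbb{R}^m$ with inner product $(x,y)_M=y^TMx$; similarly $\mathbb{R}^s_\Delta$. $\mathbb{R}^k$ without subscript carries the standard inner product. For a compact linear operator $A:\mathcal{X}\to\mathcal{Y}$ between separable Hilbert spaces with Hilbert adjoint $A^*$, the core singular values and singular vectors are the positive singular values $\sigma_1\ge\sigma_2\ge\cdots>0$ (square roots of the positive eigenvalues of $A^*A$, equivalently of $AA^*$), together with orthonormal families $\{\xi_i\}\subset\mathcal{X}$ (eigenvectors of $A^*A$) and $\{\eta_i\}\subset\mathcal{Y}$ (eigenvectors of $AA^*$) satisfying $A\xi_i=\sigma_i\eta_i$ and $A^*\eta_i=\sigma_i\xi_i$ for all $i$; in the triples above, the first vector lies in the domain and the second in the codomain. For a matrix $A:\mathbb{R}^s_\Delta\to\mathbb{R}^m_M$, the adjoint is $A^*=\Delta^{-1}A^TM$. The adjoint of $K$ is $(K^*x)(t)=(x,u(t))_X$. *)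

theory Defs
  imports "HOL-Analysis.Analysis"
begin

text \<open>Equality of two elements a, b of a (pre-)Hilbert space given by a carrier C
  and an inner product ip, in the weak sense: (a,z) = c (b,z) for all z in C,
  i.e. a = c b as elements of the Hilbert space (for L2 this is a.e. equality).\<close>
definition heq_scaled :: "('x \<Rightarrow> 'x \<Rightarrow> real) \<Rightarrow> 'x set \<Rightarrow> 'x \<Rightarrow> real \<Rightarrow> 'x \<Rightarrow> bool" where
  "heq_scaled ip C a c b \<longleftrightarrow> (\<forall>z\<in>C. ip a z = c * ip b z)"

text \<open>The last clause says the xi_i exhaust the eigenvectors of A* A with positive
  eigenvalue (so the sigma_i are all positive singular values, with multiplicity).\<close>
definition core_svd ::
  "('x \<Rightarrow> 'x \<Rightarrow> real) \<Rightarrow> 'x set \<Rightarrow> ('y \<Rightarrow> 'y \<Rightarrow> real) \<Rightarrow> 'y set \<Rightarrow>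
   ('x \<Rightarrow> 'y) \<Rightarrow> ('y \<Rightarrow> 'x) \<Rightarrow> nat set \<Rightarrow> (nat \<Rightarrow> real) \<Rightarrow> (nat \<Rightarrow> 'x) \<Rightarrow> (nat \<Rightarrow> 'y) \<Rightarrow> bool" where
  "core_svd ip1 C1 ip2 C2 A Aadj I \<sigma> \<xi> \<eta> \<longleftrightarrow>
     0 \<notin> I \<and> (\<forall>i\<in>I. \<forall>j. 1 \<le> j \<and> j \<le> i \<longrightarrow> j \<in> I) \<and>
     (\<forall>i\<in>I. 0 < \<sigma> i) \<and>
     (\<forall>i\<in>I. \<forall>j\<in>I. i \<le> j \<longrightarrow> \<sigma> j \<le> \<sigma> i) \<and>
     (\<forall>i\<in>I. \<xi> i \<in> C1 \<and> \<eta> i \<in> C2) \<and>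
     (\<forall>i\<in>I. \<forall>j\<in>I. ip1 (\<xi> i) (\<xi> j) = (if i = j then 1 else 0)) \<and>
     (\<forall>i\<in>I. \<forall>j\<in>I. ip2 (\<eta> i) (\<eta> j) = (if i = j then 1 else 0)) \<and>
     (\<forall>i\<in>I. heq_scaled ip2 C2 (A (\<xi> i)) (\<sigma> i) (\<eta> i)) \<and>
     (\<forall>i\<in>I. heq_scaled ip1 C1 (Aadj (\<eta> i)) (\<sigma> i) (\<xi> i)) \<and>
     (\<forall>x\<in>C1. \<forall>c>0. (heq_scaled ip1 C1 (Aadj (A x)) c x \<and> (\<forall>i\<in>I. ip1 x (\<xi> i) = 0))
         \<longrightarrow> ip1 x x = 0)"

subsection \<open>Finite-dimensional spaces: vectors nat => real with components 1..n\<close>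

definition vecs :: "nat \<Rightarrow> (nat \<Rightarrow> real) set" where
  "vecs n = {x. \<forall>k. k \<notin> {1..n} \<longrightarrow> x k = 0}"

definition mat_vec :: "nat \<Rightarrow> nat \<Rightarrow> (nat \<Rightarrow> nat \<Rightarrow> real) \<Rightarrow> (nat \<Rightarrow> real) \<Rightarrow> (nat \<Rightarrow> real)" where
  "mat_vec r c A x = (\<lambda>k. if k \<in> {1..r} then (\<Sum>j=1..c. A k j * x j) else 0)"

definition mat_mul :: "nat \<Rightarrow> (nat \<Rightarrow> nat \<Rightarrow> real) \<Rightarrow> (nat \<Rightarrow> nat \<Rightarrow> real) \<Rightarrow> (nat \<Rightarrow> nat \<Rightarrow> real)" where
  "mat_mul n A B = (\<lambda>i j. \<Sum>l=1..n. A i l * B l j)"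

definition mat_transpose :: "(nat \<Rightarrow> nat \<Rightarrow> real) \<Rightarrow> (nat \<Rightarrow> nat \<Rightarrow> real)" where
  "mat_transpose A = (\<lambda>i j. A j i)"

definition diag_mat :: "(nat \<Rightarrow> real) \<Rightarrow> (nat \<Rightarrow> nat \<Rightarrow> real)" where
  "diag_mat d = (\<lambda>i j. if i = j then d i else 0)"

definition wip :: "nat \<Rightarrow> (nat \<Rightarrow> nat \<Rightarrow> real) \<Rightarrow> (nat \<Rightarrow> real) \<Rightarrow> (nat \<Rightarrow> real) \<Rightarrow> real" where
  "wip n W x y = (\<Sum>k=1..n. \<Sum>l=1..n. y k * W k l * x l)"

text \<open>adjoint of A : R^c_D -> R^r_W, namely D^{-1} A^T W (D diagonal with entries d)\<close>
definition mat_adj :: "nat \<Rightarrow> nat \<Rightarrow> (nat \<Rightarrow> real) \<Rightarrow> (nat \<Rightarrow> nat \<Rightarrow> real) \<Rightarrow> (nat \<Rightarrow> nat \<Rightarrow> real)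
    \<Rightarrow> (nat \<Rightarrow> nat \<Rightarrow> real)" where
  "mat_adj r c d W A = mat_mul c (diag_mat (\<lambda>j. 1 / d j)) (mat_mul r (mat_transpose A) W)"

subsection \<open>L2(0,T) represented by (representatives of) square-integrable functions\<close>

definition L2 :: "real \<Rightarrow> (real \<Rightarrow> real) set" where
  "L2 T = {f. f \<in> borel_measurable (lebesgue_on {0..T}) \<and>
               integrable (lebesgue_on {0..T}) (\<lambda>t. (f t)\<^sup>2)}"

definition L2_ip :: "real \<Rightarrow> (real \<Rightarrow> real) \<Rightarrow> (real \<Rightarrow> real) \<Rightarrow> real" where
  "L2_ip T f g = (LINT t|lebesgue_on {0..T}. f t * g t)"

definition chi :: "(nat \<Rightarrow> real) \<Rightarrow> nat \<Rightarrow> real \<Rightarrow> real" where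
  "chi tt j t = (if tt j < t \<and> t < tt (Suc j) then 1 else 0)"

definition deltas :: "(nat \<Rightarrow> real) \<Rightarrow> nat \<Rightarrow> real" where
  "deltas tt j = tt (Suc j) - tt j"

definition pod_u :: "(nat \<Rightarrow> real) \<Rightarrow> (nat \<Rightarrow> nat \<Rightarrow> real) \<Rightarrow> (nat \<Rightarrow> 'a::real_vector)
    \<Rightarrow> nat \<Rightarrow> nat \<Rightarrow> real \<Rightarrow> 'a" where
  "pod_u tt U \<phi> s m t = (\<Sum>j=1..s. chi tt j t *\<^sub>R (\<Sum>k=1..m. U k j *\<^sub>R \<phi> k))"

end

theory Submission
  imports Defs
begin

lemma chi_ind: "chi tt j = indicator {tt j<..<tt (Suc j)}"
  by (auto simp: chi_def indicator_def fun_eq_iff)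

lemma meas_borel_on: "(f::real\<Rightarrow>real) \<in> borel_measurable borel \<Longrightarrow> f \<in> borel_measurable (lebesgue_on S)"
  by (simp add: measurable_completion measurable_restrict_space1)

lemma L2_mult_int:
  assumes "f \<in> L2 T" "g \<in> L2 T"
  shows "integrable (lebesgue_on {0..T}) (\<lambda>t. f t * g t)"
proof (rule Bochner_Integration.integrable_bound)
  show "integrable (lebesgue_on {0..T}) (\<lambda>t. (f t)\<^sup>2 + (g t)\<^sup>2)"
    using assms by (auto simp: L2_def)
  show "(\<lambda>t. f t * g t) \<in> borel_measurable (lebesgue_on {0..T})"
    using assms by (auto simp: L2_def)
  show "AE x in lebesgue_on {0..T}. norm (f x * g x) \<le> norm ((f x)\<^sup>2 + (g x)\<^sup>2)"
  proof (rule AE_I2)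
    fix x
    have h: "2*\<bar>f x\<bar>*\<bar>g x\<bar> \<le> (f x)\<^sup>2 + (g x)\<^sup>2"
      using sum_squares_bound[of "\<bar>f x\<bar>" "\<bar>g x\<bar>"] by simp
    have "0 \<le> \<bar>f x\<bar>*\<bar>g x\<bar>" by simp
    then have "\<bar>f x\<bar>*\<bar>g x\<bar> \<le> (f x)\<^sup>2 + (g x)\<^sup>2" using h by linarith
    then show "norm (f x * g x) \<le> norm ((f x)\<^sup>2 + (g x)\<^sup>2)"
      by (simp add: abs_mult)
  qed
qed

lemma int_ind:
  fixes a b T :: real assumes "0 \<le> a" "a \<le> b" "b \<le> T"
  shows "(LINT t|lebesgue_on {0..T}. indicator {a<..<b} t) = b - a"
proof -
  have "(LINT t|lebesgue_on {0..T}. indicator {a<..<b} t) = measure (lebesgue_on {0..T}) {a<..<b}"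
    using assms by (subst Bochner_Integration.integral_indicator) (auto intro!: arg_cong[where f="measure _"])
  also have "\<dots> = measure lebesgue {a<..<b}"
    using assms by (subst measure_restrict_space) auto
  also have "\<dots> = b - a" using assms by simp
  finally show ?thesis .
qed

lemma bounded_L2:
  fixes T :: real
  assumes "g \<in> borel_measurable (lebesgue_on {0..T})" "\<And>t. \<bar>g t\<bar> \<le> B"
  shows "g \<in> L2 T"
proof -
  have fm: "finite_measure (lebesgue_on {0..T})"
    by (rule finite_measure_lebesgue_on) simp
  have "integrable (lebesgue_on {0..T}) (\<lambda>t. (g t)\<^sup>2)"
  proof (rule finite_measure.integrable_const_bound[OF fm])
    show "AE x in lebesgue_on {0..T}. norm ((g x)\<^sup>2) \<le> B\<^sup>2"
      using assms(2) by (intro AE_I2) (simp, metis abs_ge_zero power2_abs power_mono)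
    show "(\<lambda>t. (g t)\<^sup>2) \<in> borel_measurable (lebesgue_on {0..T})"
      using assms(1) by measurable
  qed
  then show ?thesis using assms(1) by (simp add: L2_def)
qed

lemma L2_ip_comm: "L2_ip T f g = L2_ip T g f"
  by (simp add: L2_ip_def mult.commute)

locale podset =
  fixes \<phi> :: "nat \<Rightarrow> 'a::{real_inner, complete_space, second_countable_topology}"
    and T :: real and tt :: "nat \<Rightarrow> real" and s m :: nat and U :: "nat \<Rightarrow> nat \<Rightarrow> real"
  assumes Tpos: "T > 0" and t1: "tt 1 = 0" and incr: "\<forall>j\<in>{1..s}. tt j < tt (Suc j)"
    and tend: "tt (Suc s) = T"
    and inj: "inj_on \<phi> {1..m}" and indep: "independent (\<phi> ` {1..m})"
begin

definition st :: "(nat \<Rightarrow> real) \<Rightarrow> real \<Rightarrow> real" where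
  "st a t = (\<Sum>l=1..s. a l * chi tt l t)"
definition uj :: "nat \<Rightarrow> 'a" where "uj j = (\<Sum>k=1..m. U k j *\<^sub>R \<phi> k)"
definition E :: "(nat \<Rightarrow> real) \<Rightarrow> 'a" where "E a = (\<Sum>k=1..m. a k *\<^sub>R \<phi> k)"
definition cz :: "nat \<Rightarrow> (real \<Rightarrow> real) \<Rightarrow> real" where
  "cz l z = (LINT t|lebesgue_on {0..T}. chi tt l t * z t)"

lemma mono_aux: "1 \<le> j \<Longrightarrow> j + Suc d \<le> Suc s \<Longrightarrow> tt j < tt (j + Suc d)"
proof (induction d)
  case 0 then show ?case using incr by auto
next
  case (Suc d)
  then have "tt j < tt (j + Suc d)" by auto
  moreover have "tt (j + Suc d) < tt (Suc (j + Suc d))" using incr Suc.prems by auto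
  ultimately show ?case by simp
qed

lemma tt_mono: "1 \<le> j \<Longrightarrow> j < l \<Longrightarrow> l \<le> Suc s \<Longrightarrow> tt j < tt l"
  using mono_aux[of j "l - j - 1"] by auto

lemma tt_range: "j \<in> {1..s} \<Longrightarrow> 0 \<le> tt j \<and> tt (Suc j) \<le> T"
proof -
  assume j: "j \<in> {1..s}"
  have "tt 1 \<le> tt j" using tt_mono[of 1 j] j by (cases "j = 1") auto
  moreover have "tt (Suc j) \<le> tt (Suc s)" using tt_mono[of "Suc j" "Suc s"] j by (cases "j = s") auto
  ultimately show ?thesis using t1 tend by simp
qed

lemma delta_pos: "j \<in> {1..s} \<Longrightarrow> deltas tt j > 0"
  using incr by (simp add: deltas_def)

lemma chi_meas: "chi tt j \<in> borel_measurable (lebesgue_on {0..T})"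
  unfolding chi_ind by (rule meas_borel_on) simp

lemma chi_L2: "chi tt j \<in> L2 T"
  by (rule bounded_L2[OF chi_meas, of _ 1]) (simp add: chi_def)

lemma st_meas: "st a \<in> borel_measurable (lebesgue_on {0..T})"
  unfolding st_def using chi_meas by measurable

lemma st_L2: "st a \<in> L2 T"
proof (rule bounded_L2[OF st_meas, of _ "\<Sum>l=1..s. \<bar>a l\<bar>"])
  fix t
  have "\<bar>st a t\<bar> \<le> (\<Sum>l=1..s. \<bar>a l * chi tt l t\<bar>)" unfolding st_def by (rule sum_abs)
  also have "\<dots> \<le> (\<Sum>l=1..s. \<bar>a l\<bar>)"
    by (rule sum_mono) (auto simp: chi_def abs_mult)
  finally show "\<bar>st a t\<bar> \<le> (\<Sum>l=1..s. \<bar>a l\<bar>)" .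
qed

lemma chi_chi: "j \<in> {1..s} \<Longrightarrow> l \<in> {1..s} \<Longrightarrow>
   chi tt j t * chi tt l t = (if j = l then chi tt j t else 0)"
proof -
  assume j: "j \<in> {1..s}" and l: "l \<in> {1..s}"
  have *: "p < q \<Longrightarrow> q \<in> {1..s} \<Longrightarrow> tt (Suc p) \<le> tt q" for p q
    using tt_mono[of "Suc p" q] by (cases "Suc p = q") auto
  have "j < l \<Longrightarrow> tt (Suc j) \<le> tt l" "l < j \<Longrightarrow> tt (Suc l) \<le> tt j"
    using *[of j l] *[of l j] j l by auto
  then show ?thesis
    by (cases j l rule: linorder_cases) (auto simp: chi_def)
qed

lemma int_chi: "j \<in> {1..s} \<Longrightarrow> (LINT t|lebesgue_on {0..T}. chi tt j t) = deltas tt j"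
  unfolding chi_ind deltas_def using tt_range[of j] delta_pos[of j]
  by (subst int_ind) (auto simp: deltas_def)

lemma cz_chi: "j \<in> {1..s} \<Longrightarrow> l \<in> {1..s} \<Longrightarrow> cz j (chi tt l) = (if j = l then deltas tt j else 0)"
  unfolding cz_def by (simp add: chi_chi int_chi)

lemma cz_int: "z \<in> L2 T \<Longrightarrow> integrable (lebesgue_on {0..T}) (\<lambda>t. chi tt l t * z t)"
  using L2_mult_int[OF chi_L2] by blast

lemma ip_st: "z \<in> L2 T \<Longrightarrow> L2_ip T (st a) z = (\<Sum>l=1..s. a l * cz l z)"
proof -
  assume z: "z \<in> L2 T"
  have "L2_ip T (st a) z = (LINT t|lebesgue_on {0..T}. (\<Sum>l=1..s. a l * (chi tt l t * z t)))"
    unfolding L2_ip_def st_def by (simp add: sum_distrib_right mult.assoc)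
  also have "\<dots> = (\<Sum>l=1..s. (LINT t|lebesgue_on {0..T}. a l * (chi tt l t * z t)))"
    by (rule Bochner_Integration.integral_sum[where f="\<lambda>l t. a l * (chi tt l t * z t)"]) (auto intro: cz_int[OF z])
  also have "\<dots> = (\<Sum>l=1..s. a l * cz l z)"
    unfolding cz_def by simp
  finally show ?thesis .
qed

lemma cz_st: "j \<in> {1..s} \<Longrightarrow> cz j (st b) = deltas tt j * b j"
proof -
  assume j: "j \<in> {1..s}"
  have "cz j (st b) = L2_ip T (st b) (chi tt j)"
    unfolding cz_def L2_ip_def by (simp add: mult.commute)
  also have "\<dots> = (\<Sum>l=1..s. b l * cz l (chi tt j))" by (rule ip_st[OF chi_L2])
  also have "\<dots> = (\<Sum>l=1..s. if l = j then b l * deltas tt l else 0)"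
    by (rule sum.cong) (use j in \<open>auto simp: cz_chi\<close>)
  also have "\<dots> = deltas tt j * b j" using j by simp
  finally show ?thesis .
qed

lemma ip_st_st: "L2_ip T (st a) (st b) = (\<Sum>l=1..s. deltas tt l * a l * b l)"
  by (simp add: ip_st[OF st_L2] cz_st mult.commute mult.left_commute)


lemma ip_st_chi: "L2_ip T (st b) (chi tt j) = cz j (st b)"
  by (simp add: cz_def L2_ip_def mult.commute)

definition Kop :: "(real \<Rightarrow> real) \<Rightarrow> 'a" where
  "Kop g = (LINT t|lebesgue_on {0..T}. g t *\<^sub>R pod_u tt U \<phi> s m t)"
definition KK :: "(nat \<Rightarrow> real) \<Rightarrow> 'a" where
  "KK y = (\<Sum>j=1..s. (deltas tt j * y j) *\<^sub>R uj j)"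

lemma pod_u_uj: "pod_u tt U \<phi> s m t = (\<Sum>j=1..s. chi tt j t *\<^sub>R uj j)"
  by (simp add: pod_u_def uj_def)

lemma K_eq: "g \<in> L2 T \<Longrightarrow> Kop g = (\<Sum>j=1..s. cz j g *\<^sub>R uj j)"
proof -
  assume g: "g \<in> L2 T"
  have "Kop g = (LINT t|lebesgue_on {0..T}. (\<Sum>j=1..s. (chi tt j t * g t) *\<^sub>R uj j))"
    unfolding Kop_def pod_u_uj by (simp add: scaleR_sum_right mult.commute)
  also have "\<dots> = (\<Sum>j=1..s. (LINT t|lebesgue_on {0..T}. (chi tt j t * g t) *\<^sub>R uj j))"
    by (rule Bochner_Integration.integral_sum[where f="\<lambda>j t. (chi tt j t * g t) *\<^sub>R uj j"]) (auto intro: cz_int[OF g])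
  also have "\<dots> = (\<Sum>j=1..s. cz j g *\<^sub>R uj j)"
    unfolding cz_def by (rule sum.cong[OF refl], rule integral_scaleR_left) (auto intro: cz_int[OF g])
  finally show ?thesis .
qed

lemma K_gen: "g \<in> L2 T \<Longrightarrow> (\<forall>j\<in>{1..s}. cz j g = deltas tt j * y j) \<Longrightarrow> Kop g = KK y"
  unfolding KK_def by (simp add: K_eq)

lemma K_st: "Kop (st y) = KK y"
  by (rule K_gen[OF st_L2]) (simp add: cz_st)

lemma Kadj_eq: "inner y (pod_u tt U \<phi> s m t) = st (\<lambda>j. inner y (uj j)) t"
  by (simp add: pod_u_uj st_def inner_sum_right mult.commute)

lemma E_inner: "inner (E a) (E b) = (\<Sum>k=1..m. \<Sum>l=1..m. a k * b l * inner (\<phi> k) (\<phi> l))"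
  unfolding E_def by (simp add: inner_sum_left inner_sum_right sum_distrib_left mult.assoc)
    (subst sum.swap, simp add: mult_ac)

lemma wip_E: "wip m (\<lambda>j k. inner (\<phi> j) (\<phi> k)) x y = inner (E y) (E x)"
  unfolding wip_def E_inner by (intro sum.cong refl) (simp add: mult_ac)

lemma E_zero: assumes "E a = 0" "k \<in> {1..m}" shows "a k = 0"
proof -
  have fin: "finite (\<phi> ` {1..m})" by simp
  define u where "u v = a (inv_into {1..m} \<phi> v)" for v
  have "(\<Sum>v\<in>\<phi> ` {1..m}. u v *\<^sub>R v) = (\<Sum>k\<in>{1..m}. u (\<phi> k) *\<^sub>R \<phi> k)"
    by (rule sum.reindex[OF inj, unfolded comp_def])
  also have "\<dots> = E a"
    unfolding E_def u_def by (rule sum.cong[OF refl], subst inv_into_f_f[OF inj]) auto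
  finally have "(\<Sum>v\<in>\<phi> ` {1..m}. u v *\<^sub>R v) = 0" using assms(1) by simp
  then have "\<forall>v\<in>\<phi> ` {1..m}. u v = 0"
    using indep real_vector.dependent_finite[OF fin] by blast
  then have "u (\<phi> k) = 0" using assms(2) by blast
  then show ?thesis unfolding u_def using inv_into_f_f[OF inj assms(2)] by simp
qed

lemma E_lin: "E a - c *\<^sub>R E b = E (\<lambda>k. a k - c * b k)"
  unfolding E_def by (simp add: scaleR_diff_left sum_subtractf scaleR_sum_right)

lemma E_cong: "(\<forall>k\<in>{1..m}. a k = b k) \<Longrightarrow> E a = E b"
  unfolding E_def by (rule sum.cong) auto

lemma E_eq_iff: "E a = c *\<^sub>R E b \<longleftrightarrow> (\<forall>k\<in>{1..m}. a k = c * b k)"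
proof
  assume "E a = c *\<^sub>R E b"
  then have "E (\<lambda>k. a k - c * b k) = 0" using E_lin[of a c b] by simp
  then show "\<forall>k\<in>{1..m}. a k = c * b k" using E_zero by fastforce
next
  assume "\<forall>k\<in>{1..m}. a k = c * b k"
  then have "E (\<lambda>k. a k - c * b k) = 0" by (subst E_cong[of _ "\<lambda>k. 0"]) (auto simp: E_def)
  then show "E a = c *\<^sub>R E b" using E_lin[of a c b] by simp
qed

lemma heq_M: "heq_scaled (wip m (\<lambda>j k. inner (\<phi> j) (\<phi> k))) (vecs m) a c b \<longleftrightarrow> E a = c *\<^sub>R E b"
proof
  assume h: "heq_scaled (wip m (\<lambda>j k. inner (\<phi> j) (\<phi> k))) (vecs m) a c b"
  define z where "z k = (if k \<in> {1..m} then a k - c * b k else 0)" for k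
  have z: "z \<in> vecs m" by (simp add: z_def vecs_def)
  have Ez: "E z = E a - c *\<^sub>R E b" unfolding E_lin by (rule E_cong) (simp add: z_def)
  have "inner (E z) (E a) = c * inner (E z) (E b)"
    using h z unfolding heq_scaled_def wip_E by blast
  then have "inner (E z) (E a - c *\<^sub>R E b) = 0" by (simp add: inner_diff_right)
  then have "inner (E a - c *\<^sub>R E b) (E a - c *\<^sub>R E b) = 0" using Ez by simp
  then show "E a = c *\<^sub>R E b" by simp
next
  assume "E a = c *\<^sub>R E b"
  then show "heq_scaled (wip m (\<lambda>j k. inner (\<phi> j) (\<phi> k))) (vecs m) a c b"
    unfolding heq_scaled_def wip_E by simp
qed

lemma sum_delta_aux: fixes c :: real shows "finite A \<Longrightarrow> (\<Sum>l\<in>A. f l * (if k = l then c else 0) * g l) = (if k \<in> A then f k * c * g k else 0)"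
proof -
  assume "finite A"
  have "(\<Sum>l\<in>A. f l * (if k = l then c else 0) * g l) = (\<Sum>l\<in>A. if l = k then f k * c * g k else 0)"
    by (rule sum.cong) auto
  then show ?thesis using \<open>finite A\<close> by simp
qed

lemma sum_delta_left: fixes c :: real shows "finite A \<Longrightarrow> (\<Sum>p\<in>A. (if k = p then c else 0) * h p) = (if k \<in> A then c * h k else 0)"
proof -
  assume "finite A"
  have "(\<Sum>p\<in>A. (if k = p then c else 0) * h p) = (\<Sum>p\<in>A. if p = k then c * h k else 0)"
    by (rule sum.cong) auto
  then show ?thesis using \<open>finite A\<close> by simp
qed

lemma wip_D: "wip s (diag_mat d) x y = (\<Sum>k=1..s. d k * x k * y k)"
  unfolding wip_def diag_mat_def
  by (rule sum.cong[OF refl], subst sum_delta_aux) (auto simp: mult_ac)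

lemma heq_D: "heq_scaled (wip s (diag_mat (deltas tt))) (vecs s) a c b \<longleftrightarrow> (\<forall>k\<in>{1..s}. a k = c * b k)"
proof
  assume h: "heq_scaled (wip s (diag_mat (deltas tt))) (vecs s) a c b"
  show "\<forall>k\<in>{1..s}. a k = c * b k"
  proof
    fix k assume k: "k \<in> {1..s}"
    define z where "z l = (if l = k then 1 else (0::real))" for l
    have "z \<in> vecs s" using k by (simp add: z_def vecs_def)
    then have "wip s (diag_mat (deltas tt)) a z = c * wip s (diag_mat (deltas tt)) b z"
      using h unfolding heq_scaled_def by blast
    then have "deltas tt k * a k = c * (deltas tt k * b k)"
      using k by (simp add: wip_D z_def if_distrib[of "\<lambda>z. _ * z"] cong: if_cong)
    then show "a k = c * b k" using delta_pos[OF k] by simp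
  qed
next
  assume "\<forall>k\<in>{1..s}. a k = c * b k"
  then show "heq_scaled (wip s (diag_mat (deltas tt))) (vecs s) a c b"
    unfolding heq_scaled_def wip_D by (simp add: sum_distrib_left mult_ac)
qed

lemma heq_UNIV: "heq_scaled inner UNIV a c b \<longleftrightarrow> a = c *\<^sub>R (b::'a)"
proof
  assume "heq_scaled inner UNIV a c b"
  then have "inner a (a - c *\<^sub>R b) = c * inner b (a - c *\<^sub>R b)" unfolding heq_scaled_def by blast
  then have "inner (a - c *\<^sub>R b) (a - c *\<^sub>R b) = 0" by (simp add: inner_diff_left)
  then show "a = c *\<^sub>R b" by simp
qed (simp add: heq_scaled_def)

lemma heq_st: "heq_scaled (L2_ip T) (L2 T) (st a) c (st b) \<longleftrightarrow> (\<forall>l\<in>{1..s}. a l = c * b l)"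
proof
  assume h: "heq_scaled (L2_ip T) (L2 T) (st a) c (st b)"
  show "\<forall>l\<in>{1..s}. a l = c * b l"
  proof
    fix l assume l: "l \<in> {1..s}"
    have "L2_ip T (st a) (chi tt l) = c * L2_ip T (st b) (chi tt l)"
      using h chi_L2 unfolding heq_scaled_def by blast
    then have "deltas tt l * a l = c * (deltas tt l * b l)" using l by (simp add: ip_st_chi cz_st)
    then show "a l = c * b l" using delta_pos[OF l] by simp
  qed
next
  assume ab: "\<forall>l\<in>{1..s}. a l = c * b l"
  show "heq_scaled (L2_ip T) (L2 T) (st a) c (st b)"
    unfolding heq_scaled_def
  proof
    fix z assume z: "z \<in> L2 T"
    have "L2_ip T (st a) z = (\<Sum>l=1..s. c * (b l * cz l z))"
      unfolding ip_st[OF z] by (rule sum.cong) (use ab in auto)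
    also have "\<dots> = c * L2_ip T (st b) z" unfolding ip_st[OF z] by (simp add: sum_distrib_left)
    finally show "L2_ip T (st a) z = c * L2_ip T (st b) z" .
  qed
qed

lemma A_entry: "j \<in> {1..s} \<Longrightarrow> mat_mul s U (diag_mat d) k j = U k j * d j"
proof -
  assume j: "j \<in> {1..s}"
  have "(\<Sum>l=1..s. U k l * (if l = j then d l else 0)) = (\<Sum>l=1..s. if l = j then U k j * d j else 0)"
    by (rule sum.cong) auto
  then show ?thesis unfolding mat_mul_def diag_mat_def using j by simp
qed

lemma E_A: "E (mat_vec m s (mat_mul s U (diag_mat (deltas tt))) y) = KK y"
proof -
  have "E (mat_vec m s (mat_mul s U (diag_mat (deltas tt))) y)
     = (\<Sum>k=1..m. (\<Sum>j=1..s. U k j * deltas tt j * y j) *\<^sub>R \<phi> k)"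
    unfolding E_def mat_vec_def by (rule sum.cong[OF refl]) (simp add: A_entry)
  also have "\<dots> = (\<Sum>k=1..m. \<Sum>j=1..s. (deltas tt j * y j) *\<^sub>R (U k j *\<^sub>R \<phi> k))"
    by (simp add: scaleR_sum_left mult_ac)
  also have "\<dots> = KK y"
    unfolding KK_def uj_def scaleR_sum_right by (rule sum.swap)
  finally show ?thesis .
qed

lemma adj_entry:
  assumes k: "k \<in> {1..s}"
  shows "mat_vec s m (mat_adj m s (deltas tt) (\<lambda>j k. inner (\<phi> j) (\<phi> k))
            (mat_mul s U (diag_mat (deltas tt)))) v k = inner (uj k) (E v)"
proof -
  have e: "mat_adj m s (deltas tt) (\<lambda>j k. inner (\<phi> j) (\<phi> k)) (mat_mul s U (diag_mat (deltas tt))) k l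
      = (\<Sum>q=1..m. U q k * inner (\<phi> q) (\<phi> l))" for l
  proof -
    have "mat_adj m s (deltas tt) (\<lambda>j k. inner (\<phi> j) (\<phi> k)) (mat_mul s U (diag_mat (deltas tt))) k l
       = 1 / deltas tt k * (\<Sum>q=1..m. U q k * deltas tt k * inner (\<phi> q) (\<phi> l))"
      unfolding mat_adj_def unfolding mat_mul_def[of s "diag_mat _"] unfolding diag_mat_def[of "\<lambda>j. 1 / deltas tt j"]
      using k by (simp add: sum_delta_left mat_mul_def[of m] mat_transpose_def A_entry)
    also have "\<dots> = (\<Sum>q=1..m. U q k * inner (\<phi> q) (\<phi> l))"
      using delta_pos[OF k] by (simp add: sum_distrib_left)
    finally show ?thesis .
  qed
  have "mat_vec s m (mat_adj m s (deltas tt) (\<lambda>j k. inner (\<phi> j) (\<phi> k))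
            (mat_mul s U (diag_mat (deltas tt)))) v k = (\<Sum>l=1..m. \<Sum>q=1..m. U q k * inner (\<phi> q) (\<phi> l) * v l)"
    unfolding mat_vec_def e using k by (simp add: sum_distrib_right)
  also have "\<dots> = inner (uj k) (E v)"
    unfolding uj_def E_def by (simp add: inner_sum_left inner_sum_right sum_distrib_left mult_ac)
  finally show ?thesis .
qed


lemma st_fun: "st a = (\<lambda>t. \<Sum>l=1..s. a l * chi tt l t)"
  by (rule ext) (simp add: st_def)

lemma cz_ip: "cz j g = L2_ip T g (chi tt j)"
  by (simp add: cz_def L2_ip_def mult.commute)

end

lemma heq_right: "heq_scaled ip C b 1 b' \<Longrightarrow> heq_scaled ip C a c b \<longleftrightarrow> heq_scaled ip C a c b'"
  by (simp add: heq_scaled_def)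

theorem proposition3p1:
  fixes \<phi> :: "nat \<Rightarrow> 'a::{real_inner, complete_space, second_countable_topology}"
    and T :: real and tt :: "nat \<Rightarrow> real" and s m :: nat
    and U :: "nat \<Rightarrow> nat \<Rightarrow> real"
    and I :: "nat set" and \<sigma> :: "nat \<Rightarrow> real"
    and w v :: "nat \<Rightarrow> nat \<Rightarrow> real"
    and f :: "nat \<Rightarrow> real \<Rightarrow> real" and x :: "nat \<Rightarrow> 'a"
  defines "M \<equiv> (\<lambda>j k. inner (\<phi> j) (\<phi> k))"
    and "K \<equiv> (\<lambda>g. LINT t|lebesgue_on {0..T}. g t *\<^sub>R pod_u tt U \<phi> s m t)"
    and "Kadj \<equiv> (\<lambda>y t. inner y (pod_u tt U \<phi> s m t))"
    and "A \<equiv> mat_mul s U (diag_mat (deltas tt))"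
  assumes "T > 0" and "tt 1 = 0" and "\<forall>j\<in>{1..s}. tt j < tt (Suc j)" and "tt (Suc s) = T"
    and "inj_on \<phi> {1..m}" and "independent (\<phi> ` {1..m})"
    and "\<forall>i\<in>I. v i \<in> vecs m \<and> w i \<in> vecs s \<and> f i \<in> L2 T"
    and "\<forall>i\<in>I. x i = (\<Sum>k=1..m. v i k *\<^sub>R \<phi> k)"
    and "\<forall>i\<in>I. \<forall>j\<in>{1..s}. w i j = (LINT t|lebesgue_on {0..T}. (1 / (deltas tt) j) * chi tt j t * f i t)"
    and "\<forall>i\<in>I. heq_scaled (L2_ip T) (L2 T) (f i) 1 (\<lambda>t. \<Sum>l=1..s. w i l * chi tt l t)"
  shows "core_svd (wip s (diag_mat (deltas tt))) (vecs s) (wip m M) (vecs m)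
            (mat_vec m s A) (mat_vec s m (mat_adj m s (deltas tt) M A)) I \<sigma> w v
         \<longleftrightarrow> core_svd (L2_ip T) (L2 T) inner UNIV K Kadj I \<sigma> f x"
proof -
  interpret P: podset \<phi> T tt s m U
    using assms(5-10) by unfold_locales auto
  have Keq: "K = P.Kop" unfolding assms(2) P.Kop_def by (rule ext) simp
  have Kadjeq: "\<And>y. Kadj y = P.st (\<lambda>j. inner y (P.uj j))"
    unfolding assms(3) by (rule ext) (simp add: P.Kadj_eq)
  have Mdef: "M = (\<lambda>j k. inner (\<phi> j) (\<phi> k))" using assms(1) by simp
  have Adef: "A = mat_mul s U (diag_mat (deltas tt))" using assms(4) by simp
  have hI: "\<And>i. i \<in> I \<Longrightarrow> v i \<in> vecs m \<and> w i \<in> vecs s \<and> f i \<in> L2 T" using assms(11) by blast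
  have xE: "\<And>i. i \<in> I \<Longrightarrow> x i = P.E (v i)" using assms(12) by (simp add: P.E_def)
  have fst: "\<And>i. i \<in> I \<Longrightarrow> heq_scaled (L2_ip T) (L2 T) (f i) 1 (P.st (w i))"
    using assms(14) by (simp add: P.st_fun)
  have fz: "\<And>i z. i \<in> I \<Longrightarrow> z \<in> L2 T \<Longrightarrow> L2_ip T (f i) z = L2_ip T (P.st (w i)) z"
    using fst by (simp add: heq_scaled_def)
  have czf: "P.cz j (f i) = deltas tt j * w i j" if i: "i \<in> I" and j: "j \<in> {1..s}" for i j
  proof -
    have "w i j = (LINT t|lebesgue_on {0..T}. (1 / deltas tt j) * (chi tt j t * f i t))"
      using assms(13) i j by (simp add: mult.assoc)
    also have "\<dots> = (1 / deltas tt j) * P.cz j (f i)" unfolding P.cz_def by simp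
    finally show ?thesis using P.delta_pos[OF j] by simp
  qed
  have Kf: "\<And>i. i \<in> I \<Longrightarrow> K (f i) = P.KK (w i)"
    unfolding Keq using hI czf by (intro P.K_gen) auto
  have ff: "L2_ip T (f i) (f j) = (\<Sum>l=1..s. deltas tt l * w i l * w j l)" if "i \<in> I" "j \<in> I" for i j
  proof -
    have "L2_ip T (f i) (f j) = L2_ip T (f j) (P.st (w i))"
      using that hI fz L2_ip_comm by metis
    also have "\<dots> = L2_ip T (P.st (w j)) (P.st (w i))" using that fz P.st_L2 by blast
    also have "\<dots> = (\<Sum>l=1..s. deltas tt l * w i l * w j l)" by (simp add: P.ip_st_st mult_ac)
    finally show ?thesis .
  qed
  have gst: "L2_ip T g (f i) = L2_ip T (P.st (w i)) g" if "i \<in> I" "g \<in> L2 T" for i g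
    using that fz L2_ip_comm by metis
  have c3: "(\<forall>i\<in>I. \<forall>j\<in>I. wip s (diag_mat (deltas tt)) (w i) (w j) = (if i = j then 1 else 0))
      = (\<forall>i\<in>I. \<forall>j\<in>I. L2_ip T (f i) (f j) = (if i = j then 1 else 0))"
    using ff by (simp add: P.wip_D)
  have vv: "wip m M (v i) (v j) = inner (x i) (x j)" if "i \<in> I" "j \<in> I" for i j
    using that by (simp add: Mdef P.wip_E xE inner_commute)
  have c4: "(\<forall>i\<in>I. \<forall>j\<in>I. wip m M (v i) (v j) = (if i = j then 1 else 0))
      = (\<forall>i\<in>I. \<forall>j\<in>I. inner (x i) (x j) = (if i = j then 1 else 0))"
    using vv by simp
  have c5: "(\<forall>i\<in>I. heq_scaled (wip m M) (vecs m) (mat_vec m s A (w i)) (\<sigma> i) (v i))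
      = (\<forall>i\<in>I. heq_scaled inner UNIV (K (f i)) (\<sigma> i) (x i))"
    by (simp add: Mdef Adef P.heq_M P.E_A P.heq_UNIV Kf xE)
  have Bk: "\<And>y k. k \<in> {1..s} \<Longrightarrow> mat_vec s m (mat_adj m s (deltas tt) M A) (mat_vec m s A y) k
       = inner (P.uj k) (P.KK y)"
    by (simp add: Mdef Adef P.adj_entry P.E_A)
  have c6i: "heq_scaled (wip s (diag_mat (deltas tt))) (vecs s) (mat_vec s m (mat_adj m s (deltas tt) M A) (v i)) (\<sigma> i) (w i)
      = heq_scaled (L2_ip T) (L2 T) (Kadj (x i)) (\<sigma> i) (f i)" if i: "i \<in> I" for i
  proof -
    have "heq_scaled (wip s (diag_mat (deltas tt))) (vecs s) (mat_vec s m (mat_adj m s (deltas tt) M A) (v i)) (\<sigma> i) (w i)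
      \<longleftrightarrow> (\<forall>k\<in>{1..s}. inner (P.uj k) (P.E (v i)) = \<sigma> i * w i k)"
      unfolding P.heq_D by (simp add: Mdef Adef P.adj_entry)
    also have "\<dots> \<longleftrightarrow> heq_scaled (L2_ip T) (L2 T) (Kadj (x i)) (\<sigma> i) (P.st (w i))"
      unfolding Kadjeq P.heq_st using i by (simp add: xE inner_commute)
    also have "\<dots> \<longleftrightarrow> heq_scaled (L2_ip T) (L2 T) (Kadj (x i)) (\<sigma> i) (f i)"
      using heq_right[OF fst[OF i]] by simp
    finally show ?thesis .
  qed
  have c6: "(\<forall>i\<in>I. heq_scaled (wip s (diag_mat (deltas tt))) (vecs s) (mat_vec s m (mat_adj m s (deltas tt) M A) (v i)) (\<sigma> i) (w i))
      = (\<forall>i\<in>I. heq_scaled (L2_ip T) (L2 T) (Kadj (x i)) (\<sigma> i) (f i))"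
    using c6i by simp
  have hB: "heq_scaled (wip s (diag_mat (deltas tt))) (vecs s) (mat_vec s m (mat_adj m s (deltas tt) M A) (mat_vec m s A y)) c y
      \<longleftrightarrow> (\<forall>k\<in>{1..s}. inner (P.uj k) (P.KK y) = c * y k)" for y c
    unfolding P.heq_D using Bk by auto
  have c7: "(\<forall>y\<in>vecs s. \<forall>c>0. (heq_scaled (wip s (diag_mat (deltas tt))) (vecs s)
        (mat_vec s m (mat_adj m s (deltas tt) M A) (mat_vec m s A y)) c y
        \<and> (\<forall>i\<in>I. wip s (diag_mat (deltas tt)) y (w i) = 0)) \<longrightarrow> wip s (diag_mat (deltas tt)) y y = 0)
    = (\<forall>g\<in>L2 T. \<forall>c>0. (heq_scaled (L2_ip T) (L2 T) (Kadj (K g)) c g \<and> (\<forall>i\<in>I. L2_ip T g (f i) = 0))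
        \<longrightarrow> L2_ip T g g = 0)" (is "?L = ?R")
  proof
    assume L: ?L
    show ?R
    proof (intro ballI allI impI)
      fix g c assume g: "g \<in> L2 T" and c: "(c::real) > 0"
        and H: "heq_scaled (L2_ip T) (L2 T) (Kadj (K g)) c g \<and> (\<forall>i\<in>I. L2_ip T g (f i) = 0)"
      define a where "a = (\<lambda>j. inner (K g) (P.uj j))"
      define y where "y = (\<lambda>k. if k \<in> {1..s} then a k / c else 0)"
      have y: "y \<in> vecs s" by (simp add: y_def vecs_def)
      have Ka: "Kadj (K g) = P.st a" by (simp add: Kadjeq a_def)
      have gy: "L2_ip T g z = L2_ip T (P.st y) z" if z: "z \<in> L2 T" for z
      proof -
        have 1: "L2_ip T (P.st a) z = c * L2_ip T g z" using H z unfolding Ka heq_scaled_def by blast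
        have "L2_ip T (P.st y) z = (\<Sum>l=1..s. (1/c) * (a l * P.cz l z))"
          unfolding P.ip_st[OF z] by (rule sum.cong) (auto simp: y_def)
        also have "\<dots> = (1/c) * L2_ip T (P.st a) z" unfolding P.ip_st[OF z] by (simp add: sum_distrib_left)
        finally show ?thesis using 1 c by simp
      qed
      have czg: "P.cz j g = deltas tt j * y j" if "j \<in> {1..s}" for j
      proof -
        have "P.cz j g = L2_ip T g (chi tt j)" by (rule P.cz_ip)
        also have "\<dots> = L2_ip T (P.st y) (chi tt j)" by (rule gy[OF P.chi_L2])
        also have "\<dots> = P.cz j (P.st y)" by (rule P.ip_st_chi)
        also have "\<dots> = deltas tt j * y j" by (rule P.cz_st[OF that])
        finally show ?thesis .
      qed
      have Kg: "K g = P.KK y" unfolding Keq using g czg by (intro P.K_gen) auto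
      have ay: "\<forall>k\<in>{1..s}. inner (P.uj k) (P.KK y) = c * y k"
        using c by (simp add: a_def y_def Kg inner_commute)
      have orth: "\<forall>i\<in>I. wip s (diag_mat (deltas tt)) y (w i) = 0"
      proof
        fix i assume i: "i \<in> I"
        have "0 = L2_ip T g (f i)" using H i by simp
        also have "\<dots> = L2_ip T g (P.st (w i))" using gst[OF i g] L2_ip_comm by metis
        also have "\<dots> = L2_ip T (P.st y) (P.st (w i))" using gy P.st_L2 by blast
        also have "\<dots> = wip s (diag_mat (deltas tt)) y (w i)" by (simp add: P.ip_st_st P.wip_D)
        finally show "wip s (diag_mat (deltas tt)) y (w i) = 0" by simp
      qed
      have "wip s (diag_mat (deltas tt)) y y = 0" using L y c ay orth hB by blast
      moreover have "L2_ip T g g = L2_ip T (P.st y) (P.st y)"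
        using gy[OF g] gy[OF P.st_L2] L2_ip_comm by metis
      ultimately show "L2_ip T g g = 0" by (simp add: P.ip_st_st P.wip_D)
    qed
  next
    assume R: ?R
    show ?L
    proof (intro ballI allI impI)
      fix y c assume y: "y \<in> vecs s" and c: "(c::real) > 0"
        and H: "heq_scaled (wip s (diag_mat (deltas tt))) (vecs s)
        (mat_vec s m (mat_adj m s (deltas tt) M A) (mat_vec m s A y)) c y
        \<and> (\<forall>i\<in>I. wip s (diag_mat (deltas tt)) y (w i) = 0)"
      have ay: "\<forall>k\<in>{1..s}. inner (P.uj k) (P.KK y) = c * y k" using H hB by blast
      have Kg: "K (P.st y) = P.KK y" by (simp add: Keq P.K_st)
      have h1: "heq_scaled (L2_ip T) (L2 T) (Kadj (K (P.st y))) c (P.st y)"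
        unfolding Kg Kadjeq P.heq_st using ay by (simp add: inner_commute)
      have h2: "\<forall>i\<in>I. L2_ip T (P.st y) (f i) = 0"
      proof
        fix i assume i: "i \<in> I"
        have "L2_ip T (P.st y) (f i) = L2_ip T (P.st (w i)) (P.st y)" using gst[OF i P.st_L2] .
        also have "\<dots> = wip s (diag_mat (deltas tt)) y (w i)" by (simp add: P.ip_st_st P.wip_D mult_ac)
        finally show "L2_ip T (P.st y) (f i) = 0" using H i by simp
      qed
      have "L2_ip T (P.st y) (P.st y) = 0" using R P.st_L2 h1 h2 c by blast
      then show "wip s (diag_mat (deltas tt)) y y = 0" by (simp add: P.wip_D P.ip_st_st)
    qed
  qed
  have c2: "(\<forall>i\<in>I. w i \<in> vecs s \<and> v i \<in> vecs m) = (\<forall>i\<in>I. f i \<in> L2 T \<and> x i \<in> UNIV)"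
    using hI by auto
  show ?thesis
    unfolding core_svd_def c2 c3 c4 c5 c6 c7 ..
qed

end
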